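(* For unweighted directed graphs and any threshold $\zeta\ge 1$, there exists an $O(\zeta)$-round deterministic $\mathsf{CONGEST}$ algorithm that lets the first endpoint $v_i$ of each edge $e=(v_i,v_{i+1})$ of $P$ compute the shortest length of a replacement path for $e$ with a short detour (i.e., with a detour of at most $\zeta$ hops).
   Context: $G=(V,E)$ is an unweighted directed graph with $n=|V|$ which is also the communication network (communication over edges in both directions). $\mathsf{CONGEST}$: synchronous rounds, each vertex may send an $O(\log n)$-bit message to each neighbour per round, unique identifiers, unlimited local computation. $P=(s=v_0,v_1,\dots,v_{h_{st}}=t)$ is a given shortest $s$-$t$ path. Initially the endpoints of each edge of $P$ know the edge belongs to $P$, and each vertex $v_i$ of $P$ knows its index $i$, $\mathrm{dist}(s,v_i)$ and $\mathrm{dist}(v_i,t)$. A replacement path for $e=(v_i,v_{i+1})$ of the considered form is an $s$-$t$ path consisting of the subpath of $P$ from $s$ to $v_j$, then a path (the detour) from $v_j$ to $v_l$ sharing no edge with $P$, then the subpath of $P$ from $v_l$ to $t$, where $j\le i$ and $l\ge i+1$. The detour is short if it has at most $\zeta$ edges. The required output is the minimum length over all such replacement paths for $e$ with a short detour ($\infty$ if none exists). *)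

theory Defs
  imports Main "HOL-Library.Extended_Nat"
begin

definition digraph :: "nat set \<Rightarrow> (nat \<times> nat) set \<Rightarrow> bool" where
  "digraph V E \<longleftrightarrow> finite V \<and> E \<subseteq> V \<times> V"

text \<open>A walk is a nonempty vertex list whose consecutive vertices are joined by edges;
  its number of edges (hops) is length minus one.\<close>

definition is_walk :: "(nat \<times> nat) set \<Rightarrow> nat list \<Rightarrow> bool" where
  "is_walk E xs \<longleftrightarrow> xs \<noteq> [] \<and> (\<forall>k < length xs - 1. (xs ! k, xs ! Suc k) \<in> E)"

definition walk_edges :: "nat list \<Rightarrow> (nat \<times> nat) set" where
  "walk_edges xs = {(xs ! k, xs ! Suc k) | k. k < length xs - 1}"

text \<open>Directed hop distance (infinity if unreachable).\<close>

definition dist :: "(nat \<times> nat) set \<Rightarrow> nat \<Rightarrow> nat \<Rightarrow> enat" where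
  "dist E u v = (INF xs \<in> {xs. is_walk E xs \<and> hd xs = u \<and> last xs = v}. enat (length xs - 1))"

text \<open>P = ps is a shortest s-t path with s = hd ps, t = last ps.\<close>

definition shortest_path :: "(nat \<times> nat) set \<Rightarrow> nat list \<Rightarrow> bool" where
  "shortest_path E ps \<longleftrightarrow> is_walk E ps \<and> enat (length ps - 1) = dist E (hd ps) (last ps)"

text \<open>Minimum length of a replacement path for the edge e_i = (ps!i, ps!(i+1)) of P
  consisting of P[s,v_j], a detour D from v_j to v_l (j \<le> i, l \<ge> i+1) that is a
  path sharing no edge with P and has at most zeta edges, and P[v_l,t].
  The infimum of the empty set is \<infinity>.\<close>

definition rp_short :: "(nat \<times> nat) set \<Rightarrow> nat list \<Rightarrow> nat \<Rightarrow> nat \<Rightarrow> enat" where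
  "rp_short E ps \<zeta> i = Inf {enat (j + (length D - 1) + (length ps - 1 - l)) | j l D.
      j \<le> i \<and> i + 1 \<le> l \<and> l < length ps \<and>
      is_walk E D \<and> distinct D \<and> hd D = ps ! j \<and> last D = ps ! l \<and>
      length D - 1 \<le> \<zeta> \<and> walk_edges D \<inter> walk_edges ps = {}}"

text \<open>Initial local knowledge of a node: its identifier, n, the threshold zeta,
  the identifiers of its out- and in-neighbours, which of its incident edges lie on P
  (as the sets of P-out-neighbours and P-in-neighbours), and, if it lies on P,
  its index i on P, dist(s,v_i) and dist(v_i,t).\<close>

datatype local_input = LocalInput
  (li_id: nat) (li_n: nat) (li_zeta: nat)
  (li_out: "nat set") (li_in: "nat set")
  (li_P_out: "nat set") (li_P_in: "nat set")
  (li_index: "nat option") (li_dist_s: "enat option") (li_dist_t: "enat option")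

text \<open>A message is a natural number (None = no message). A node's local view after r
  rounds is its list of received-message functions (sender id \<Rightarrow> message), one per
  round. A deterministic algorithm consists of a sending function (local input, view,
  recipient id \<Rightarrow> message) and an output function; local computation is unlimited
  since these are arbitrary functions.\<close>

type_synonym view = "(nat \<Rightarrow> nat option) list"
type_synonym congest_alg =
  "(local_input \<Rightarrow> view \<Rightarrow> nat \<Rightarrow> nat option) \<times> (local_input \<Rightarrow> view \<Rightarrow> enat)"

text \<open>Communication network: the underlying undirected graph.\<close>

definition nbrs :: "(nat \<times> nat) set \<Rightarrow> nat \<Rightarrow> nat set" where
  "nbrs E v = {u. ((v, u) \<in> E \<or> (u, v) \<in> E) \<and> u \<noteq> v}"

definition node_input :: "nat set \<Rightarrow> (nat \<times> nat) set \<Rightarrow> nat list \<Rightarrow> nat \<Rightarrow> nat \<Rightarrow> local_input" where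
  "node_input V E ps \<zeta> v = LocalInput v (card V) \<zeta>
     {u. (v, u) \<in> E} {u. (u, v) \<in> E}
     {u. (v, u) \<in> walk_edges ps} {u. (u, v) \<in> walk_edges ps}
     (if v \<in> set ps then Some (LEAST i. ps ! i = v) else None)
     (if v \<in> set ps then Some (dist E (hd ps) v) else None)
     (if v \<in> set ps then Some (dist E v (last ps)) else None)"

fun exec_view :: "congest_alg \<Rightarrow> nat set \<Rightarrow> (nat \<times> nat) set \<Rightarrow> nat list \<Rightarrow> nat \<Rightarrow> nat \<Rightarrow> nat \<Rightarrow> view" where
  "exec_view A V E ps \<zeta> 0 = (\<lambda>v. [])"
| "exec_view A V E ps \<zeta> (Suc r) = (\<lambda>v. exec_view A V E ps \<zeta> r v @
     [\<lambda>u. if u \<in> nbrs E v then fst A (node_input V E ps \<zeta> u) (exec_view A V E ps \<zeta> r u) v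
          else None])"

text \<open>Bandwidth constraint: during the first T rounds every message sent over an edge
  has O(log n) bits, i.e. is a number below (n+2)^c.\<close>

definition bandwidth_ok :: "nat \<Rightarrow> congest_alg \<Rightarrow> nat set \<Rightarrow> (nat \<times> nat) set \<Rightarrow> nat list \<Rightarrow> nat \<Rightarrow> nat \<Rightarrow> bool" where
  "bandwidth_ok c A V E ps \<zeta> T \<longleftrightarrow>
     (\<forall>r < T. \<forall>v \<in> V. \<forall>u \<in> nbrs E v.
        (case fst A (node_input V E ps \<zeta> v) (exec_view A V E ps \<zeta> r v) u of
           None \<Rightarrow> True | Some m \<Rightarrow> m < (card V + 2) ^ c))"

definition output_after :: "congest_alg \<Rightarrow> nat set \<Rightarrow> (nat \<times> nat) set \<Rightarrow> nat list \<Rightarrow> nat \<Rightarrow> nat \<Rightarrow> nat \<Rightarrow> enat" where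
  "output_after A V E ps \<zeta> T v = snd A (node_input V E ps \<zeta> v) (exec_view A V E ps \<zeta> T v)"

end

theory Submission
  imports Defs
begin

definition sw :: "(nat \<times> nat) set \<Rightarrow> nat list \<Rightarrow> bool" where
  "sw E xs = successively (\<lambda>a b. (a, b) \<in> E) xs"

lemma is_walk_sw: "is_walk E xs \<longleftrightarrow> xs \<noteq> [] \<and> sw E xs"
  unfolding is_walk_def sw_def successively_conv_nth by auto

lemma walk_glue:
  assumes "is_walk E xs" "is_walk E ys" "last xs = hd ys"
  shows "is_walk E (xs @ tl ys) \<and> hd (xs @ tl ys) = hd xs \<and> last (xs @ tl ys) = last ys
         \<and> length (xs @ tl ys) = length xs + length ys - 1"
proof -
  obtain y ys' where ys: "ys = y # ys'" using assms(2) by (cases ys) (auto simp: is_walk_sw)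
  have s1: "successively (\<lambda>a b. (a, b) \<in> E) (y # ys')" using assms(2) ys by (simp add: is_walk_sw sw_def)
  have t: "successively (\<lambda>a b. (a, b) \<in> E) ys'" and c: "ys' = [] \<or> (y, hd ys') \<in> E"
    using s1 by (auto simp add: successively_Cons)
  have sx: "successively (\<lambda>a b. (a, b) \<in> E) xs" "xs \<noteq> []" using assms(1) by (simp_all add: is_walk_sw sw_def)
  have lx: "last xs = y" using assms(3) ys by simp
  have "successively (\<lambda>a b. (a, b) \<in> E) (xs @ ys')"
    using t c sx lx by (auto simp: successively_append_iff)
  moreover have "last (xs @ ys') = last ys" using ys lx by (cases "ys' = []") auto
  ultimately show ?thesis using ys sx by (auto simp: is_walk_sw sw_def)
qed

lemma walk_take: "is_walk E xs \<Longrightarrow> j < length xs \<Longrightarrow>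
   is_walk E (take (Suc j) xs) \<and> hd (take (Suc j) xs) = hd xs \<and> last (take (Suc j) xs) = xs ! j"
  unfolding is_walk_def
  apply (auto simp: last_conv_nth hd_conv_nth min_def)
  proof -
    fix xs :: "nat list" and j
    assume "j < length xs" "length xs \<le> Suc j"
    then have "length xs - Suc 0 = j" by arith
    then show "xs ! (length xs - Suc 0) = xs ! j" by simp
  qed

lemma walk_drop: "is_walk E xs \<Longrightarrow> j < length xs \<Longrightarrow>
   is_walk E (drop j xs) \<and> hd (drop j xs) = xs ! j \<and> last (drop j xs) = last xs"
  unfolding is_walk_def by (auto simp: last_conv_nth hd_drop_conv_nth)

lemma dist_le: "is_walk E xs \<Longrightarrow> dist E (hd xs) (last xs) \<le> enat (length xs - 1)"
  unfolding dist_def by (rule INF_lower) auto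

lemma walk_shorten:
  assumes "is_walk E xs" "\<not> distinct xs"
  shows "\<exists>ys. is_walk E ys \<and> hd ys = hd xs \<and> last ys = last xs \<and> length ys < length xs"
proof -
  obtain a b c y where xs: "xs = a @ [y] @ b @ [y] @ c" using not_distinct_decomp[OF assms(2)] by blast
  let ?ys = "a @ [y] @ c"
  have s: "sw E xs" using assms(1) by (simp add: is_walk_sw)
  have "sw E ?ys" using s unfolding xs sw_def
    by (auto simp: successively_append_iff successively_Cons)
  moreover have "hd ?ys = hd xs" using xs by (cases a) auto
  moreover have "last ?ys = last xs" using xs by (cases c) auto
  ultimately show ?thesis using xs by (intro exI[of _ ?ys]) (auto simp: is_walk_sw)
qed

lemma walk_path:
  "is_walk E xs \<Longrightarrow> \<exists>ys. is_walk E ys \<and> distinct ys \<and> hd ys = hd xs \<and> last ys = last xs \<and> length ys \<le> length xs"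
proof (induction "length xs" arbitrary: xs rule: less_induct)
  case less
  show ?case
  proof (cases "distinct xs")
    case True then show ?thesis using less.prems by blast
  next
    case False
    then obtain ys where "is_walk E ys" "hd ys = hd xs" "last ys = last xs" "length ys < length xs"
      using walk_shorten less.prems by blast
    then show ?thesis using less.hyps[of ys] by fastforce
  qed
qed

lemma sp_walk_len:
  assumes "shortest_path E ps" "is_walk E w" "hd w = hd ps" "last w = last ps"
  shows "length ps \<le> length w"
proof -
  have "enat (length ps - 1) \<le> enat (length w - 1)"
    using assms dist_le[OF assms(2)] unfolding shortest_path_def by simp
  moreover have "w \<noteq> []" "ps \<noteq> []" using assms unfolding shortest_path_def is_walk_def by auto
  ultimately show ?thesis by (cases ps; cases w) auto
qed

lemma sp_distinct:
  assumes "shortest_path E ps" shows "distinct ps"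
proof (rule ccontr)
  assume "\<not> distinct ps"
  then obtain ys where "is_walk E ys" "hd ys = hd ps" "last ys = last ps" "length ys < length ps"
    using walk_shorten assms unfolding shortest_path_def by blast
  then show False using sp_walk_len[OF assms] by fastforce
qed

lemma sp_lb:
  assumes "shortest_path E ps" "is_walk E w" "hd w = ps ! j" "last w = ps ! l" "j \<le> l" "l < length ps"
  shows "l - j \<le> length w - 1"
proof -
  have P: "is_walk E ps" using assms(1) unfolding shortest_path_def by simp
  have t: "is_walk E (take (Suc j) ps)" "hd (take (Suc j) ps) = hd ps" "last (take (Suc j) ps) = ps ! j"
    using walk_take[OF P, of j] assms by auto
  have d: "is_walk E (drop l ps)" "hd (drop l ps) = ps ! l" "last (drop l ps) = last ps"
    using walk_drop[OF P, of l] assms by auto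
  define g1 where "g1 = take (Suc j) ps @ tl w"
  have g1: "is_walk E g1" "hd g1 = hd ps" "last g1 = ps ! l" "length g1 = Suc j + length w - 1"
    using walk_glue[OF t(1) assms(2)] t assms unfolding g1_def by auto
  define g2 where "g2 = g1 @ tl (drop l ps)"
  have g2: "is_walk E g2" "hd g2 = hd ps" "last g2 = last ps" "length g2 = length g1 + (length ps - l) - 1"
    using walk_glue[OF g1(1) d(1)] g1 d unfolding g2_def by auto
  have "length ps \<le> length g2" using sp_walk_len[OF assms(1) g2(1-3)] .
  moreover have "w \<noteq> []" using assms(2) unfolding is_walk_def by simp
  ultimately show ?thesis using g1(4) g2(4) assms(5,6) by (cases w) auto
qed

lemma sp_dist_t:
  assumes "shortest_path E ps" "l < length ps"
  shows "dist E (ps ! l) (last ps) = enat (length ps - 1 - l)"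
proof (rule antisym)
  have P: "is_walk E ps" using assms(1) unfolding shortest_path_def by simp
  have d: "is_walk E (drop l ps)" "hd (drop l ps) = ps ! l" "last (drop l ps) = last ps"
    using walk_drop[OF P, of l] assms by auto
  show "dist E (ps ! l) (last ps) \<le> enat (length ps - 1 - l)"
    using dist_le[OF d(1)] d by simp
  show "enat (length ps - 1 - l) \<le> dist E (ps ! l) (last ps)"
    unfolding dist_def
  proof (rule INF_greatest)
    fix w assume "w \<in> {xs. is_walk E xs \<and> hd xs = ps ! l \<and> last xs = last ps}"
    then have w: "is_walk E w" "hd w = ps ! l" "last w = last ps" by auto
    have t: "is_walk E (take (Suc l) ps)" "hd (take (Suc l) ps) = hd ps" "last (take (Suc l) ps) = ps ! l"
      using walk_take[OF P, of l] assms by auto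
    define g where "g = take (Suc l) ps @ tl w"
    have g: "is_walk E g" "hd g = hd ps" "last g = last ps" "length g = Suc l + length w - 1"
      using walk_glue[OF t(1) w(1)] t w assms unfolding g_def by auto
    have "length ps \<le> length g" using sp_walk_len[OF assms(1) g(1-3)] .
    moreover have "w \<noteq> []" using w unfolding is_walk_def by simp
    ultimately show "enat (length ps - 1 - l) \<le> enat (length w - 1)" using g(4) assms(2) by (cases w) auto
  qed
qed

lemma walk_set_sub:
  assumes "digraph V E" "is_walk E xs" "2 \<le> length xs"
  shows "set xs \<subseteq> V"
proof
  fix x assume "x \<in> set xs"
  then obtain k where k: "k < length xs" "xs ! k = x" by (auto simp: in_set_conv_nth)
  have EV: "E \<subseteq> V \<times> V" using assms(1) unfolding digraph_def by simp
  show "x \<in> V"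
  proof (cases "k < length xs - 1")
    case True
    then have "(xs ! k, xs ! Suc k) \<in> E" using assms(2) unfolding is_walk_def by auto
    then show ?thesis using EV k by auto
  next
    case False
    then have "k - 1 < length xs - 1" "Suc (k - 1) = k" using k assms(3) by auto
    then have "(xs ! (k - 1), xs ! Suc (k - 1)) \<in> E" using assms(2) unfolding is_walk_def by blast
    then have "(xs ! (k - 1), xs ! k) \<in> E" using \<open>Suc (k - 1) = k\<close> by simp
    then show ?thesis using EV k by auto
  qed
qed

lemma distinct_walk_len:
  assumes "digraph V E" "is_walk E xs" "distinct xs"
  shows "length xs \<le> card V + 1"
proof (cases "2 \<le> length xs")
  case True
  have "finite V" using assms(1) unfolding digraph_def by simp
  then have "card (set xs) \<le> card V" using walk_set_sub[OF assms(1,2) True] card_mono by blast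
  then show ?thesis using distinct_card[OF assms(3)] by simp
next
  case False then show ?thesis by simp
qed

definition E2 :: "(nat \<times> nat) set \<Rightarrow> nat list \<Rightarrow> (nat \<times> nat) set" where
  "E2 E ps = {(a, b). (a, b) \<in> E \<and> (a, b) \<notin> walk_edges ps \<and> a \<noteq> b}"

definition Wv :: "(nat \<times> nat) set \<Rightarrow> nat list \<Rightarrow> nat \<Rightarrow> nat \<Rightarrow> nat set" where
  "Wv E ps r v = {j. j < length ps \<and> (\<exists>xs. is_walk (E2 E ps) xs \<and> length xs = Suc r \<and> hd xs = ps ! j \<and> last xs = v)}"

definition mm :: "(nat \<times> nat) set \<Rightarrow> nat list \<Rightarrow> nat \<Rightarrow> nat \<Rightarrow> enat" where
  "mm E ps r v = (INF j \<in> Wv E ps r v. enat j)"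

definition ff :: "(nat \<times> nat) set \<Rightarrow> nat list \<Rightarrow> nat \<Rightarrow> nat \<Rightarrow> nat \<Rightarrow> nat \<Rightarrow> enat" where
  "ff E ps z n l x = (INF r \<in> {..min z n}. (if mm E ps r (ps ! l) \<le> enat x
       then mm E ps r (ps ! l) + enat r + enat (length ps - 1 - l) else \<infinity>))"

definition Ht :: "(nat \<times> nat) set \<Rightarrow> nat list \<Rightarrow> nat \<Rightarrow> nat \<Rightarrow> nat \<Rightarrow> nat \<Rightarrow> enat" where
  "Ht E ps z n i x = (INF l \<in> {l. i \<le> l \<and> l \<le> x + z \<and> l < length ps}. ff E ps z n l x)"

lemma enat_INF_attained:
  fixes f :: "'a \<Rightarrow> enat"
  assumes "(INF x\<in>A. f x) \<noteq> \<infinity>"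
  shows "\<exists>x\<in>A. (INF x\<in>A. f x) = f x"
proof -
  have ne: "f ` A \<noteq> {}" using assms by (auto simp: top_enat_def[symmetric])
  obtain a where a: "a \<in> f ` A" using ne by blast
  have "(LEAST x. x \<in> f ` A) \<in> f ` A" using a by (rule LeastI)
  then have "Inf (f ` A) \<in> f ` A" using ne unfolding Inf_enat_def by simp
  then show ?thesis by auto
qed

lemma Wv0: "Wv E ps 0 v = {j. j < length ps \<and> ps ! j = v}"
proof -
  have 1: "ps ! j = v" if "length xs = Suc 0" "hd xs = ps ! j" "last xs = v" for xs j
    using that by (cases xs) auto
  have 2: "is_walk (E2 E ps) [v]" unfolding is_walk_def by simp
  show ?thesis unfolding Wv_def using 1 2 by fastforce
qed

lemma walk_snoc: "ys \<noteq> [] \<Longrightarrow> is_walk F (ys @ [v]) \<longleftrightarrow> is_walk F ys \<and> (last ys, v) \<in> F"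
  by (auto simp: is_walk_sw sw_def successively_append_iff)

lemma WvSuc: "Wv E ps (Suc r) v = (\<Union>w\<in>{w. (w, v) \<in> E2 E ps}. Wv E ps r w)"
proof (intro set_eqI iffI)
  fix j assume "j \<in> Wv E ps (Suc r) v"
  then obtain xs where x: "j < length ps" "is_walk (E2 E ps) xs" "length xs = Suc (Suc r)" "hd xs = ps ! j" "last xs = v"
    unfolding Wv_def by blast
  have xne: "xs \<noteq> []" using x(3) by auto
  obtain ys v' where xs0: "xs = ys @ [v']" using rev_exhaust[of xs] xne by blast
  have xs: "xs = ys @ [v]" using xs0 x(5) by simp
  have ne: "ys \<noteq> []" using x(3) xs by auto
  have "is_walk (E2 E ps) ys" "(last ys, v) \<in> E2 E ps" using x(2) walk_snoc[OF ne] xs by auto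
  moreover have "length ys = Suc r" "hd ys = ps ! j" using x xs ne by auto
  ultimately show "j \<in> (\<Union>w\<in>{w. (w, v) \<in> E2 E ps}. Wv E ps r w)"
    unfolding Wv_def using x(1) by blast
next
  fix j assume "j \<in> (\<Union>w\<in>{w. (w, v) \<in> E2 E ps}. Wv E ps r w)"
  then obtain w ys where y: "(w, v) \<in> E2 E ps" "j < length ps" "is_walk (E2 E ps) ys" "length ys = Suc r"
     "hd ys = ps ! j" "last ys = w"
    unfolding Wv_def by blast
  have ne: "ys \<noteq> []" using y by auto
  have "is_walk (E2 E ps) (ys @ [v])" using walk_snoc[OF ne] y by auto
  then show "j \<in> Wv E ps (Suc r) v" unfolding Wv_def using y ne by (intro CollectI conjI exI[of _ "ys @ [v]"]) auto
qed

lemma mmSuc: "mm E ps (Suc r) v = (INF w\<in>{w. (w, v) \<in> E2 E ps}. mm E ps r w)"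
  unfolding mm_def WvSuc
  by (rule antisym) (auto intro!: INF_greatest intro: INF_lower2)

lemma LEAST_idx: "distinct ps \<Longrightarrow> l < length ps \<Longrightarrow> (LEAST i. ps ! i = ps ! l) = l"
proof (rule Least_equality)
  fix y assume a: "distinct ps" "l < length ps" "ps ! y = ps ! l"
  show "l \<le> y"
  proof (rule ccontr)
    assume "\<not> l \<le> y"
    then have "y < length ps" "y \<noteq> l" using a by auto
    then show False using nth_eq_iff_index_eq[OF a(1), of y l] a by simp
  qed
qed simp

lemma mm0: "distinct ps \<Longrightarrow>
  mm E ps 0 v = (if v \<in> set ps then enat (LEAST i. ps ! i = v) else \<infinity>)"
proof (cases "v \<in> set ps")
  case True
  assume d: "distinct ps"
  then obtain l where l: "l < length ps" "ps ! l = v" using True by (auto simp: in_set_conv_nth)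
  have "Wv E ps 0 v = {l}" unfolding Wv0 using l d by (auto simp: nth_eq_iff_index_eq)
  then show ?thesis using True LEAST_idx[OF d l(1)] l by (simp add: mm_def)
next
  case False
  then have "Wv E ps 0 v = {}" unfolding Wv0 by auto
  then show ?thesis using False by (simp add: mm_def top_enat_def)
qed

lemma mm_fin: "mm E ps r v \<noteq> \<infinity> \<Longrightarrow> \<exists>j\<in>Wv E ps r v. mm E ps r v = enat j"
  unfolding mm_def using enat_INF_attained by blast

lemma Wv_lt: "j \<in> Wv E ps r v \<Longrightarrow> j < length ps"
  unfolding Wv_def by auto

lemma walk_mono: "is_walk F xs \<Longrightarrow> F \<subseteq> G \<Longrightarrow> is_walk G xs"
  unfolding is_walk_def by blast

lemma walk_edges_sub: "is_walk F xs \<Longrightarrow> walk_edges xs \<subseteq> F"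
  unfolding is_walk_def walk_edges_def by blast

lemma E2_sub: "E2 E ps \<subseteq> E"
  unfolding E2_def by blast

lemma path_E2:
  assumes "is_walk E D" "distinct D" "walk_edges D \<inter> walk_edges ps = {}"
  shows "is_walk (E2 E ps) D"
  unfolding is_walk_def
proof (intro conjI allI impI)
  show "D \<noteq> []" using assms(1) unfolding is_walk_def by simp
  fix k assume k: "k < length D - 1"
  have e: "(D ! k, D ! Suc k) \<in> E" using assms(1) k unfolding is_walk_def by blast
  have "(D ! k, D ! Suc k) \<in> walk_edges D" using k unfolding walk_edges_def by blast
  then have np: "(D ! k, D ! Suc k) \<notin> walk_edges ps" using assms(3) by blast
  have "D ! k \<noteq> D ! Suc k" using nth_eq_iff_index_eq[OF assms(2), of k "Suc k"] k by simp
  then show "(D ! k, D ! Suc k) \<in> E2 E ps" using e np unfolding E2_def by blast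
qed

lemma E2_disj: "is_walk (E2 E ps) D \<Longrightarrow> walk_edges D \<inter> walk_edges ps = {}"
  using walk_edges_sub[of "E2 E ps" D] unfolding E2_def by blast

locale sp_ctx =
  fixes V :: "nat set" and E :: "(nat \<times> nat) set" and ps :: "nat list"
  assumes dg: "digraph V E" and sp: "shortest_path E ps"
begin

lemma ps_walk: "is_walk E ps" using sp unfolding shortest_path_def by simp
lemma ps_dist: "distinct ps" using sp_distinct[OF sp] .
lemma len_bound: "length ps \<le> card V + 1"
  using distinct_walk_len[OF dg ps_walk ps_dist] .

lemma big: "(a::nat) \<le> 3 * card V \<Longrightarrow> a < (card V + 2) ^ 2"
  by (simp add: power2_eq_square algebra_simps)

lemma mm_bnd: "mm E ps r v = \<infinity> \<or> mm E ps r v < enat ((card V + 2) ^ 2)"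
proof (cases "mm E ps r v = \<infinity>")
  case False
  then obtain j where "j \<in> Wv E ps r v" "mm E ps r v = enat j" using mm_fin by blast
  then have "j < length ps" "mm E ps r v = enat j" using Wv_lt by auto
  then show ?thesis using len_bound big[of j] by auto
qed simp

lemma Ht_bnd: "Ht E ps z (card V) i x = \<infinity> \<or> Ht E ps z (card V) i x < enat ((card V + 2) ^ 2)"
proof (cases "Ht E ps z (card V) i x = \<infinity>")
  case False
  then obtain l where l: "l \<in> {l. i \<le> l \<and> l \<le> x + z \<and> l < length ps}"
    and e1: "Ht E ps z (card V) i x = ff E ps z (card V) l x"
    unfolding Ht_def using enat_INF_attained by blast
  have f1: "ff E ps z (card V) l x \<noteq> \<infinity>" using False e1 by simp
  then obtain r where r: "r \<in> {..min z (card V)}" and e2: "ff E ps z (card V) l x =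
     (if mm E ps r (ps ! l) \<le> enat x then mm E ps r (ps ! l) + enat r + enat (length ps - 1 - l) else \<infinity>)"
    unfolding ff_def using enat_INF_attained by blast
  have c: "mm E ps r (ps ! l) \<le> enat x" using f1 e2 by (auto split: if_splits)
  then have "mm E ps r (ps ! l) \<noteq> \<infinity>" by (cases "mm E ps r (ps ! l)") auto
  then obtain j where j: "j \<in> Wv E ps r (ps ! l)" "mm E ps r (ps ! l) = enat j" using mm_fin by blast
  have jl: "j < length ps" using Wv_lt[OF j(1)] .
  have "Ht E ps z (card V) i x = enat (j + r + (length ps - 1 - l))" using e1 e2 c j by simp
  moreover have "j + r + (length ps - 1 - l) \<le> 3 * card V" using jl r len_bound by auto
  ultimately show ?thesis using big by auto
qed simp

lemma Ht_empty1: "x + z < i \<Longrightarrow> Ht E ps z n i x = \<infinity>"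
  unfolding Ht_def by (auto simp: top_enat_def[symmetric])

lemma Ht_empty2: "length ps \<le> i \<Longrightarrow> Ht E ps z n i x = \<infinity>"
  unfolding Ht_def by (auto simp: top_enat_def[symmetric])

lemma Ht_rec: "i < length ps \<Longrightarrow> i \<le> x + z \<Longrightarrow>
   Ht E ps z n i x = min (ff E ps z n i x) (Ht E ps z n (Suc i) x)"
proof -
  assume a: "i < length ps" "i \<le> x + z"
  have "{l. i \<le> l \<and> l \<le> x + z \<and> l < length ps} = insert i {l. Suc i \<le> l \<and> l \<le> x + z \<and> l < length ps}"
    using a by auto
  then show ?thesis unfolding Ht_def by (simp add: INF_insert inf_min)
qed

lemma Ht_final:
  assumes i: "i < length ps - 1"
  shows "Ht E ps z (card V) (Suc i) i = rp_short E ps z i"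
proof (rule antisym)
  show "Ht E ps z (card V) (Suc i) i \<le> rp_short E ps z i"
    unfolding rp_short_def
  proof (rule Inf_greatest, clarify)
    fix j l D
    assume c: "j \<le> i" "i + 1 \<le> l" "l < length ps" "is_walk E D" "distinct D" "hd D = ps ! j"
      "last D = ps ! l" "length D - 1 \<le> z" "walk_edges D \<inter> walk_edges ps = {}"
    define r where "r = length D - 1"
    have Dne: "D \<noteq> []" using c(4) unfolding is_walk_def by simp
    have DE2: "is_walk (E2 E ps) D" using path_E2 c by blast
    have jW: "j \<in> Wv E ps r (ps ! l)" unfolding Wv_def r_def using c DE2 Dne i by auto
    have mmj: "mm E ps r (ps ! l) \<le> enat j" unfolding mm_def using jW by (rule INF_lower)
    have rn: "r \<le> card V" using distinct_walk_len[OF dg c(4,5)] unfolding r_def by simp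
    have rz: "r \<le> z" using c r_def by simp
    have "l - j \<le> r" using sp_lb[OF sp c(4,6,7)] c unfolding r_def by simp
    then have lz: "l \<le> i + z" using c(1) rz by simp
    have "Ht E ps z (card V) (Suc i) i \<le> ff E ps z (card V) l i"
      unfolding Ht_def by (rule INF_lower) (use c lz in auto)
    also have "\<dots> \<le> (if mm E ps r (ps ! l) \<le> enat i then mm E ps r (ps ! l) + enat r + enat (length ps - 1 - l) else \<infinity>)"
      unfolding ff_def by (rule INF_lower) (use rz rn in auto)
    also have "\<dots> = mm E ps r (ps ! l) + enat r + enat (length ps - 1 - l)"
      using mmj c(1) by (auto intro: order.trans)
    also have "\<dots> \<le> enat j + enat r + enat (length ps - 1 - l)"
      using mmj by (intro add_right_mono) 
    also have "\<dots> = enat (j + (length D - 1) + (length ps - 1 - l))" unfolding r_def by simp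
    finally show "Ht E ps z (card V) (Suc i) i \<le> enat (j + (length D - 1) + (length ps - 1 - l))" .
  qed
next
  show "rp_short E ps z i \<le> Ht E ps z (card V) (Suc i) i"
    unfolding Ht_def ff_def
  proof (intro INF_greatest)
    fix l r assume l: "l \<in> {l. Suc i \<le> l \<and> l \<le> i + z \<and> l < length ps}" and r: "r \<in> {..min z (card V)}"
    show "rp_short E ps z i \<le> (if mm E ps r (ps ! l) \<le> enat i then mm E ps r (ps ! l) + enat r + enat (length ps - 1 - l) else \<infinity>)"
    proof (cases "mm E ps r (ps ! l) \<le> enat i")
      case True
      then have "mm E ps r (ps ! l) \<noteq> \<infinity>" by (cases "mm E ps r (ps ! l)") auto
      then obtain j where j: "j \<in> Wv E ps r (ps ! l)" "mm E ps r (ps ! l) = enat j" using mm_fin by blast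
      have ji: "j \<le> i" using True j by simp
      obtain xs where xs: "is_walk (E2 E ps) xs" "length xs = Suc r" "hd xs = ps ! j" "last xs = ps ! l"
        using j(1) unfolding Wv_def by blast
      obtain D where D: "is_walk (E2 E ps) D" "distinct D" "hd D = ps ! j" "last D = ps ! l" "length D \<le> Suc r"
        using walk_path[OF xs(1)] xs by auto
      have DE: "is_walk E D" using walk_mono[OF D(1) E2_sub] .
      have Dd: "walk_edges D \<inter> walk_edges ps = {}" using E2_disj[OF D(1)] .
      have "rp_short E ps z i \<le> enat (j + (length D - 1) + (length ps - 1 - l))"
        unfolding rp_short_def
        apply (rule Inf_lower)
        apply (rule CollectI)
        apply (rule exI[of _ j], rule exI[of _ l], rule exI[of _ D])
        using ji l D DE Dd r by auto
      also have "\<dots> \<le> enat (j + r + (length ps - 1 - l))" using D(5) by simp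
      finally show ?thesis using True j by simp
    qed simp
  qed
qed

end

fun dec :: "nat option \<Rightarrow> enat" where
  "dec None = \<infinity>" | "dec (Some m) = enat m"

definition enc :: "nat \<Rightarrow> enat \<Rightarrow> nat option" where
  "enc n e = (if e < enat ((n + 2) ^ 2) then Some (the_enat e) else None)"

definition agg :: "(nat \<Rightarrow> nat option) \<Rightarrow> enat" where
  "agg g = (INF u. dec (g u))"

definition decP :: "local_input \<Rightarrow> (nat \<Rightarrow> nat option) \<Rightarrow> enat" where
  "decP li g = (INF u \<in> li_P_out li. dec (g u))"

definition mstate :: "local_input \<Rightarrow> view \<Rightarrow> enat" where
  "mstate li vw = (if vw = [] then (case li_index li of Some j \<Rightarrow> enat j | None \<Rightarrow> \<infinity>) else agg (last vw))"

definition dt :: "local_input \<Rightarrow> enat" where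
  "dt li = (case li_dist_t li of Some d \<Rightarrow> d | None \<Rightarrow> \<infinity>)"

definition fnode :: "local_input \<Rightarrow> view \<Rightarrow> nat \<Rightarrow> enat" where
  "fnode li vw x = (INF r \<in> {..min (li_zeta li) (li_n li)}.
     (if mstate li (take r vw) \<le> enat x then mstate li (take r vw) + enat r + dt li else \<infinity>))"

definition val2 :: "local_input \<Rightarrow> view \<Rightarrow> enat" where
  "val2 li vw = (case li_index li of
      Some i \<Rightarrow> (if li_zeta li \<le> i + (length vw - li_zeta li)
         then min (fnode li vw (i + (length vw - li_zeta li) - li_zeta li))
                  (if length vw = li_zeta li then \<infinity> else decP li (vw ! (length vw - 1)))
         else \<infinity>)
    | None \<Rightarrow> \<infinity>)"

definition send :: "local_input \<Rightarrow> view \<Rightarrow> nat \<Rightarrow> nat option" where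
  "send li vw u = enc (li_n li)
     (if length vw < li_zeta li then (if u \<in> li_out li \<and> u \<notin> li_P_out li then mstate li vw else \<infinity>)
      else if length vw < 2 * li_zeta li then (if u \<in> li_P_in li then val2 li vw else \<infinity>)
      else \<infinity>)"

definition outp :: "local_input \<Rightarrow> view \<Rightarrow> enat" where
  "outp li vw = decP li (vw ! (2 * li_zeta li - 1))"

definition ALG :: congest_alg where
  "ALG = (send, outp)"

lemma dec_enc: "e = \<infinity> \<or> e < enat ((n + 2) ^ 2) \<Longrightarrow> dec (enc n e) = e"
  unfolding enc_def by (cases e) auto

lemma enc_bnd: "(case enc n e of None \<Rightarrow> True | Some m \<Rightarrow> m < (n + 2) ^ 2)"
  unfolding enc_def by (cases e) auto

lemma ev_len: "length (exec_view A V E ps z r v) = r"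
  by (induction r arbitrary: v) auto

lemma ev_take: "q \<le> r \<Longrightarrow> take q (exec_view A V E ps z r v) = exec_view A V E ps z q v"
proof (induction r)
  case 0 then show ?case by simp
next
  case (Suc r)
  show ?case
  proof (cases "q = Suc r")
    case True then show ?thesis using ev_len[of A V E ps z "Suc r" v] by simp
  next
    case False
    then have "q \<le> r" using Suc by simp
    then show ?thesis using Suc ev_len[of A V E ps z r v] by simp
  qed
qed

lemma ev_nth: "q < r \<Longrightarrow> exec_view A V E ps z r v ! q =
  (\<lambda>u. if u \<in> nbrs E v then fst A (node_input V E ps z u) (exec_view A V E ps z q u) v else None)"
proof -
  assume "q < r"
  then have "exec_view A V E ps z r v ! q = take (Suc q) (exec_view A V E ps z r v) ! q"
    by simp
  also have "\<dots> = exec_view A V E ps z (Suc q) v ! q" using ev_take[of "Suc q" r] \<open>q < r\<close> by simp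
  also have "\<dots> = (\<lambda>u. if u \<in> nbrs E v then fst A (node_input V E ps z u) (exec_view A V E ps z q u) v else None)"
    using ev_len[of A V E ps z q v] by (simp add: nth_append)
  finally show ?thesis .
qed

lemma INF_if_top:
  fixes f :: "'b \<Rightarrow> 'a::complete_lattice"
  shows "(INF u. if P u then f u else top) = (INF u\<in>{u. P u}. f u)"
proof (rule antisym)
  show "(INF u. if P u then f u else top) \<le> (INF u\<in>{u. P u}. f u)"
  proof (rule INF_greatest)
    fix u assume "u \<in> {u. P u}"
    then show "(INF u. if P u then f u else top) \<le> f u" by (intro INF_lower2[of u]) auto
  qed
  show "(INF u\<in>{u. P u}. f u) \<le> (INF u. if P u then f u else top)"
  proof (rule INF_greatest)
    fix u show "(INF u\<in>{u. P u}. f u) \<le> (if P u then f u else top)"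
      by (cases "P u") (auto intro: INF_lower)
  qed
qed

lemma fstALG: "fst ALG = send" by (simp add: ALG_def)
lemma sndALG: "snd ALG = outp" by (simp add: ALG_def)

lemma nbrs_E2: "(u, v) \<in> E2 E ps \<Longrightarrow> u \<in> nbrs E v"
  unfolding E2_def nbrs_def by auto

context sp_ctx
begin

lemma P_out: "l < length ps \<Longrightarrow> {u. (ps ! l, u) \<in> walk_edges ps} = (if Suc l < length ps then {ps ! Suc l} else {})"
  using ps_dist unfolding walk_edges_def
  by (auto simp: nth_eq_iff_index_eq)

lemma P_in: "l < length ps \<Longrightarrow> {u. (u, ps ! l) \<in> walk_edges ps} = (if 0 < l then {ps ! (l - 1)} else {})"
  using ps_dist unfolding walk_edges_def
  by (auto simp: nth_eq_iff_index_eq)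

lemma inp_idx: "l < length ps \<Longrightarrow> li_index (node_input V E ps z (ps ! l)) = Some l"
  unfolding node_input_def using LEAST_idx[OF ps_dist] by simp

lemma inp_dt: "l < length ps \<Longrightarrow> dt (node_input V E ps z (ps ! l)) = enat (length ps - 1 - l)"
  unfolding node_input_def dt_def using sp_dist_t[OF sp] by simp

lemma phase1: "q \<le> z \<Longrightarrow> mstate (node_input V E ps z v) (exec_view ALG V E ps z q v) = mm E ps q v"
proof (induction q arbitrary: v)
  case 0
  show ?case using mm0[OF ps_dist, of E v] unfolding mstate_def node_input_def by simp
next
  case (Suc q)
  have q: "q < z" using Suc.prems by simp
  let ?g = "\<lambda>u. if u \<in> nbrs E v then send (node_input V E ps z u) (exec_view ALG V E ps z q u) v else None"
  have ev: "exec_view ALG V E ps z (Suc q) v = exec_view ALG V E ps z q v @ [?g]"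
    unfolding exec_view.simps fstALG by (rule refl)
  have d: "dec (?g u) = (if (u, v) \<in> E2 E ps then mm E ps q u else top)" for u
  proof (cases "u \<in> nbrs E v")
    case True
    have "send (node_input V E ps z u) (exec_view ALG V E ps z q u) v =
        enc (card V) (if (u, v) \<in> E2 E ps then mm E ps q u else \<infinity>)"
      using True q Suc.IH[of u] unfolding send_def ev_len
      by (auto simp: node_input_def E2_def nbrs_def ev_len)
    then show ?thesis using True dec_enc mm_bnd by (auto simp: top_enat_def)
  next
    case False
    then show ?thesis using nbrs_E2 by (auto simp: top_enat_def)
  qed
  have "mstate (node_input V E ps z v) (exec_view ALG V E ps z (Suc q) v) = (INF u. dec (?g u))"
    unfolding ev mstate_def agg_def by simp
  also have "\<dots> = (INF u\<in>{u. (u, v) \<in> E2 E ps}. mm E ps q u)"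
    unfolding d by (rule INF_if_top)
  also have "\<dots> = mm E ps (Suc q) v" by (simp add: mmSuc)
  finally show ?case .
qed

end

context sp_ctx
begin

abbreviation "inp z v \<equiv> node_input V E ps z v"
abbreviation "EV z r v \<equiv> exec_view ALG V E ps z r v"

lemma inp_simps: "li_zeta (inp z v) = z" "li_n (inp z v) = card V"
  "li_P_out (inp z v) = {u. (v, u) \<in> walk_edges ps}" "li_P_in (inp z v) = {u. (u, v) \<in> walk_edges ps}"
  "li_out (inp z v) = {u. (v, u) \<in> E}"
  unfolding node_input_def by simp_all

lemma fnode_eq: "l < length ps \<Longrightarrow> fnode (inp z (ps ! l)) (EV z (z + k) (ps ! l)) x = ff E ps z (card V) l x"
  unfolding fnode_def ff_def inp_simps
proof (rule INF_cong[OF refl])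
  assume l: "l < length ps"
  fix r assume r: "r \<in> {..min z (card V)}"
  have "take r (EV z (z + k) (ps ! l)) = EV z r (ps ! l)" using r by (intro ev_take) auto
  then have "mstate (inp z (ps ! l)) (take r (EV z (z + k) (ps ! l))) = mm E ps r (ps ! l)"
    using phase1[of r z "ps ! l"] r by simp
  then show "(if mstate (inp z (ps ! l)) (take r (EV z (z + k) (ps ! l))) \<le> enat x
          then mstate (inp z (ps ! l)) (take r (EV z (z + k) (ps ! l))) + enat r + dt (inp z (ps ! l)) else \<infinity>) =
         (if mm E ps r (ps ! l) \<le> enat x then mm E ps r (ps ! l) + enat r + enat (length ps - 1 - l) else \<infinity>)"
    using inp_dt[OF l] by simp
qed

lemma recv:
  assumes k: "k < z" and i: "Suc i < length ps"
    and S: "send (inp z (ps ! Suc i)) (EV z (z + k) (ps ! Suc i)) (ps ! i) =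
            enc (card V) (if z \<le> Suc i + k then Ht E ps z (card V) (Suc i) (Suc i + k - z) else \<infinity>)"
  shows "decP (inp z (ps ! i)) (EV z (Suc (z + k)) (ps ! i) ! (z + k)) =
         (if z \<le> Suc i + k then Ht E ps z (card V) (Suc i) (Suc i + k - z) else \<infinity>)"
proof -
  have e: "(ps ! i, ps ! Suc i) \<in> E" using ps_walk i unfolding is_walk_def by auto
  have ne: "ps ! i \<noteq> ps ! Suc i" using nth_eq_iff_index_eq[OF ps_dist, of i "Suc i"] i by simp
  have nb: "ps ! Suc i \<in> nbrs E (ps ! i)" using e ne unfolding nbrs_def by auto
  have po: "li_P_out (inp z (ps ! i)) = {ps ! Suc i}" using P_out[of i] i unfolding inp_simps by simp
  have "decP (inp z (ps ! i)) (EV z (Suc (z + k)) (ps ! i) ! (z + k)) =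
        dec (send (inp z (ps ! Suc i)) (EV z (z + k) (ps ! Suc i)) (ps ! i))"
    unfolding decP_def po ev_nth[OF lessI] fstALG using nb by simp
  also have "\<dots> = (if z \<le> Suc i + k then Ht E ps z (card V) (Suc i) (Suc i + k - z) else \<infinity>)"
    unfolding S using Ht_bnd by (intro dec_enc) auto
  finally show ?thesis .
qed

lemma recv_last: "Suc i = length ps \<Longrightarrow> decP (inp z (ps ! i)) g = \<infinity>"
  unfolding decP_def inp_simps using P_out[of i] by (simp add: top_enat_def)

lemma send2: "k < z \<Longrightarrow> 0 < i \<Longrightarrow> i < length ps \<Longrightarrow>
   send (inp z (ps ! i)) (EV z (z + k) (ps ! i)) (ps ! (i - 1)) =
   enc (card V) (if z \<le> i + k then Ht E ps z (card V) i (i + k - z) else \<infinity>)"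
proof (induction k arbitrary: i)
  case 0
  have pin: "ps ! (i - 1) \<in> li_P_in (inp z (ps ! i))" using P_in[of i] 0 unfolding inp_simps by simp
  have v: "val2 (inp z (ps ! i)) (EV z z (ps ! i)) =
      (if z \<le> i then min (ff E ps z (card V) i (i - z)) \<infinity> else \<infinity>)"
    unfolding val2_def inp_idx[OF 0(3)] inp_simps ev_len using fnode_eq[OF 0(3), of z 0] by simp
  have "z \<le> i \<Longrightarrow> min (ff E ps z (card V) i (i - z)) \<infinity> = Ht E ps z (card V) i (i - z)"
    using Ht_rec[OF 0(3), of "i - z" z "card V"] Ht_empty1[of "i - z" z "Suc i" "card V"] by simp
  then show ?case using 0 pin v unfolding send_def inp_simps ev_len by auto
next
  case (Suc k)
  have pin: "ps ! (i - 1) \<in> li_P_in (inp z (ps ! i))" using P_in[of i] Suc.prems unfolding inp_simps by simp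
  let ?x = "i + Suc k - z"
  have r: "(if z \<le> i + Suc k then decP (inp z (ps ! i)) (EV z (z + Suc k) (ps ! i) ! (z + k)) else \<infinity>)
        = (if z \<le> i + Suc k then Ht E ps z (card V) (Suc i) ?x else \<infinity>)"
  proof (cases "Suc i < length ps")
    case True
    have "EV z (z + Suc k) (ps ! i) ! (z + k) = EV z (Suc (z + k)) (ps ! i) ! (z + k)" by simp
    moreover have "decP (inp z (ps ! i)) (EV z (Suc (z + k)) (ps ! i) ! (z + k)) =
         (if z \<le> Suc i + k then Ht E ps z (card V) (Suc i) (Suc i + k - z) else \<infinity>)"
      using recv[of k z i] Suc.IH[of "Suc i"] Suc.prems True by simp
    ultimately show ?thesis by simp
  next
    case False
    then have "Suc i = length ps" using Suc.prems by simp
    then show ?thesis using recv_last Ht_empty2[of "Suc i"] by simp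
  qed
  have v: "val2 (inp z (ps ! i)) (EV z (z + Suc k) (ps ! i)) =
      (if z \<le> i + Suc k then min (ff E ps z (card V) i ?x)
          (decP (inp z (ps ! i)) (EV z (z + Suc k) (ps ! i) ! (z + k))) else \<infinity>)"
    unfolding val2_def inp_idx[OF Suc.prems(3)] inp_simps ev_len using fnode_eq[OF Suc.prems(3), of z "Suc k"]
    by simp
  have "z \<le> i + Suc k \<Longrightarrow> min (ff E ps z (card V) i ?x) (Ht E ps z (card V) (Suc i) ?x) = Ht E ps z (card V) i ?x"
    using Ht_rec[OF Suc.prems(3), of ?x z "card V"] by simp
  then show ?case using Suc.prems pin v r unfolding send_def inp_simps ev_len by (auto split: if_splits)
qed

lemma output_ok:
  assumes z: "1 \<le> z" and i: "i < length ps - 1"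
  shows "output_after ALG V E ps z (2 * z) (ps ! i) = rp_short E ps z i"
proof -
  have i1: "Suc i < length ps" using i by simp
  have e1: "2 * z = Suc (z + (z - 1))" "2 * z - 1 = z + (z - 1)" using z by auto
  have "output_after ALG V E ps z (2 * z) (ps ! i) = decP (inp z (ps ! i)) (EV z (Suc (z + (z - 1))) (ps ! i) ! (z + (z - 1)))"
    unfolding output_after_def sndALG outp_def inp_simps e1 by simp
  also have "\<dots> = Ht E ps z (card V) (Suc i) i"
    using recv[of "z - 1" z i] send2[of "z - 1" z "Suc i"] z i1 by simp
  also have "\<dots> = rp_short E ps z i" using Ht_final[OF i] .
  finally show ?thesis .
qed

lemma bw_ok: "bandwidth_ok 2 ALG V E ps z T"
  unfolding bandwidth_ok_def ALG_def send_def inp_simps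
  using enc_bnd by (auto simp: node_input_def)

end

theorem proposition4p1:
  shows "\<forall>k. \<exists>C c (A :: congest_alg). \<forall>V E ps \<zeta>.
     digraph V E \<and> (\<forall>v \<in> V. v < (card V + 1) ^ k) \<and>
     shortest_path E ps \<and> \<zeta> \<ge> 1
     \<longrightarrow> bandwidth_ok c A V E ps \<zeta> (C * \<zeta>) \<and>
         (\<forall>i < length ps - 1. output_after A V E ps \<zeta> (C * \<zeta>) (ps ! i) = rp_short E ps \<zeta> i)"
proof (rule allI)
  fix k :: nat
  show "\<exists>C c (A :: congest_alg). \<forall>V E ps \<zeta>.
     digraph V E \<and> (\<forall>v \<in> V. v < (card V + 1) ^ k) \<and>
     shortest_path E ps \<and> \<zeta> \<ge> 1
     \<longrightarrow> bandwidth_ok c A V E ps \<zeta> (C * \<zeta>) \<and>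
         (\<forall>i < length ps - 1. output_after A V E ps \<zeta> (C * \<zeta>) (ps ! i) = rp_short E ps \<zeta> i)"
  proof (intro exI[of _ 2] exI[of _ ALG] allI impI)
    fix V :: "nat set" and E :: "(nat \<times> nat) set" and ps :: "nat list" and z :: nat
    assume a: "digraph V E \<and> (\<forall>v \<in> V. v < (card V + 1) ^ k) \<and> shortest_path E ps \<and> 1 \<le> z"
    interpret sp_ctx V E ps using a by unfold_locales auto
    show "bandwidth_ok 2 ALG V E ps z (2 * z) \<and>
      (\<forall>i < length ps - 1. output_after ALG V E ps z (2 * z) (ps ! i) = rp_short E ps z i)"
      using bw_ok output_ok a by auto
  qed
qed

end
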